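(* Let $F_1,F_2\colon \mathbb{R}^n \rightrightarrows \mathbb{R}^m$ be nearly convex set-valued mappings and $\varepsilon\ge 0$. Suppose that $$\mathrm{ri}(\mathrm{dom}\, F_1) \cap \mathrm{ri}(\mathrm{dom}\, F_2) \neq\emptyset .$$ Let $(\bar x,\bar y)\in\mathrm{gph}(F_1+F_2)$, where $(F_1+F_2)(x)=F_1(x)+F_2(x)$, and let $S(\bar x, \bar y)=\{(\bar y_1, \bar y_2) \in \mathbb{R}^m \times \mathbb{R}^m \mid \bar y=\bar y_1 +\bar y_2,\ \bar y_i\in F_i(\bar x),\ i=1,2 \}$. Then for every $v\in \mathbb{R}^m$ and every $(\bar y_1, \bar y_2) \in S(\bar x, \bar y)$, $$D^*_\varepsilon(F_1+F_2)(\bar x, \bar y)(v)=\bigcup_{\substack{\varepsilon_1\geq 0,\ \varepsilon_2\geq 0,\\ \varepsilon_1+\varepsilon_2=\varepsilon}}\big[D^*_{\varepsilon_1} F_1(\bar x, \bar y_1)(v)+D^*_{\varepsilon_2}F_2 (\bar x, \bar y_2)(v)\big].$$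
   Context: A set $D$ is nearly convex if there is a convex $E$ with $E\subset D\subset\overline{E}$. A set-valued mapping $F\colon\mathbb{R}^n\rightrightarrows\mathbb{R}^m$ has domain $\mathrm{dom}\,F=\{x\mid F(x)\ne\emptyset\}$ and graph $\mathrm{gph}\,F=\{(x,y)\mid y\in F(x)\}$; it is nearly convex if its graph is nearly convex. $\mathrm{ri}\,D=\{a\in D\mid\exists\delta>0,\ B(a;\delta)\cap\mathrm{aff}\,D\subset D\}$. For nonempty $\Omega$, $\bar z\in\Omega$, $\varepsilon\ge0$: $N_\varepsilon(\bar z;\Omega)=\{\xi\mid\langle\xi,z-\bar z\rangle\le\varepsilon\ \forall z\in\Omega\}$. For $(\bar x,\bar y)\in\mathrm{gph}\,F$, the $\varepsilon$-coderivative is $D^*_\varepsilon F(\bar x,\bar y)(v)=\{u\in\mathbb{R}^n\mid(u,-v)\in N_\varepsilon((\bar x,\bar y);\mathrm{gph}\,F)\}$. Sums of sets are Minkowski sums. *)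

theory Defs
  imports "HOL-Analysis.Analysis"
begin

definition nearly_convex :: "'a::real_normed_vector set \<Rightarrow> bool" where
  "nearly_convex D \<longleftrightarrow> (\<exists>E. convex E \<and> E \<subseteq> D \<and> D \<subseteq> closure E)"

definition gph :: "('a \<Rightarrow> 'b set) \<Rightarrow> ('a \<times> 'b) set" where
  "gph F = {(x, y). y \<in> F x}"

definition sv_dom :: "('a \<Rightarrow> 'b set) \<Rightarrow> 'a set" where
  "sv_dom F = {x. F x \<noteq> {}}"

definition nearly_convex_map :: "('a::real_normed_vector \<Rightarrow> 'b::real_normed_vector set) \<Rightarrow> bool" where
  "nearly_convex_map F \<longleftrightarrow> nearly_convex (gph F)"

definition eps_normal :: "real \<Rightarrow> 'a::real_inner \<Rightarrow> 'a set \<Rightarrow> 'a set" where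
  "eps_normal \<epsilon> zbar \<Omega> = {\<xi>. \<forall>z\<in>\<Omega>. inner \<xi> (z - zbar) \<le> \<epsilon>}"

definition eps_coderiv ::
  "real \<Rightarrow> ('a::real_inner \<Rightarrow> 'b::real_inner set) \<Rightarrow> 'a \<Rightarrow> 'b \<Rightarrow> 'b \<Rightarrow> 'a set" where
  "eps_coderiv \<epsilon> F xbar ybar v = {u. (u, - v) \<in> eps_normal \<epsilon> (xbar, ybar) (gph F)}"

definition sv_sum :: "('a \<Rightarrow> 'b::plus set) \<Rightarrow> ('a \<Rightarrow> 'b set) \<Rightarrow> 'a \<Rightarrow> 'b set" where
  "sv_sum F1 F2 x = {y1 + y2 | y1 y2. y1 \<in> F1 x \<and> y2 \<in> F2 x}"

definition mink_sum :: "'a::plus set \<Rightarrow> 'a set \<Rightarrow> 'a set" where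
  "mink_sum A B = {a + b | a b. a \<in> A \<and> b \<in> B}"

definition S_set :: "('a \<Rightarrow> 'b::plus set) \<Rightarrow> ('a \<Rightarrow> 'b set) \<Rightarrow> 'a \<Rightarrow> 'b \<Rightarrow> ('b \<times> 'b) set" where
  "S_set F1 F2 xbar ybar = {(y1, y2). ybar = y1 + y2 \<and> y1 \<in> F1 xbar \<and> y2 \<in> F2 xbar}"

end

theory Submission
  imports Defs
begin

lemma proper_sep:
  fixes K :: "'a::euclidean_space set"
  assumes "convex K" "K \<noteq> {}" "0 \<notin> K"
  shows "\<exists>a. (\<forall>k\<in>K. 0 \<le> a \<bullet> k) \<and> (\<exists>k\<in>K. 0 < a \<bullet> k)"
proof -
  define Q where "Q = {w. \<forall>k\<in>K. w \<bullet> k = 0}"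
  have sQ: "subspace Q" by (auto simp: subspace_def Q_def inner_add_left)
  define K' where "K' = (\<Union>x\<in>K. \<Union>y\<in>Q. {x + y})"
  have cK': "convex K'" unfolding K'_def by (rule convex_sums[OF assms(1) subspace_imp_convex[OF sQ]])
  have "0 \<notin> K'"
  proof
    assume "0 \<in> K'"
    then obtain k w where k: "k \<in> K" "w \<in> Q" "k + w = 0" by (auto simp: K'_def)
    then have "w = - k" by (metis add.commute eq_neg_iff_add_eq_0)
    with k have "k \<bullet> k = 0" by (auto simp: Q_def)
    with k assms(3) show False by simp
  qed
  then obtain a where a: "a \<noteq> 0" "\<forall>x\<in>K'. 0 \<le> a \<bullet> x"
    using separating_hyperplane_set_0[OF cK'] by blast
  obtain k0 where k0: "k0 \<in> K" using assms(2) by blast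
  have aQ: "a \<bullet> w = 0" if "w \<in> Q" for w
  proof (rule ccontr)
    assume nz: "a \<bullet> w \<noteq> 0"
    define t where "t = - (\<bar>a \<bullet> k0\<bar> + 1) / (a \<bullet> w)"
    have "t *\<^sub>R w \<in> Q" using sQ that by (simp add: subspace_scale)
    then have "k0 + t *\<^sub>R w \<in> K'" using k0 by (auto simp: K'_def)
    then have "0 \<le> a \<bullet> k0 + t * (a \<bullet> w)" using a(2) by (auto simp: inner_add_right)
    moreover have "t * (a \<bullet> w) = - (\<bar>a \<bullet> k0\<bar> + 1)" using nz by (simp add: t_def)
    ultimately show False by linarith
  qed
  have ge: "\<forall>k\<in>K. 0 \<le> a \<bullet> k"
  proof
    fix k assume "k \<in> K"
    then have "k + 0 \<in> K'" using subspace_0[OF sQ] unfolding K'_def by blast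
    then show "0 \<le> a \<bullet> k" using a(2) by simp
  qed
  have "\<exists>k\<in>K. 0 < a \<bullet> k"
  proof (rule ccontr)
    assume "\<not> ?thesis"
    with ge have "a \<in> Q" by (force simp: Q_def)
    then have "a \<bullet> a = 0" using aQ by blast
    with a(1) show False by simp
  qed
  with ge show ?thesis by blast
qed

lemma ri_dom:
  fixes F :: "'n::euclidean_space \<Rightarrow> 'm::euclidean_space set"
  assumes "convex E" "E \<subseteq> gph F" "gph F \<subseteq> closure E"
  shows "rel_interior (sv_dom F) \<subseteq> rel_interior (fst ` E)"
proof -
  have d: "sv_dom F = fst ` gph F" by (force simp: sv_dom_def gph_def)
  have s1: "fst ` E \<subseteq> sv_dom F" using assms(2) d by auto
  have s2: "sv_dom F \<subseteq> closure (fst ` E)"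
    using d closure_linear_image_subset[OF linear_fst, of E] assms(3) by blast
  have "affine hull (sv_dom F) = affine hull (closure (fst ` E))"
    using hull_mono[OF s1, of affine] hull_mono[OF s2, of affine] closure_same_affine_hull by blast
  then have "rel_interior (sv_dom F) \<subseteq> rel_interior (closure (fst ` E))"
    using subset_rel_interior[OF s2] by blast
  also have "\<dots> = rel_interior (fst ` E)"
    by (rule convex_rel_interior_closure) (rule convex_linear_image[OF linear_fst assms(1)])
  finally show ?thesis .
qed


lemma key:
  fixes F1 F2 :: "'n::euclidean_space \<Rightarrow> 'm::euclidean_space set"
  assumes cE1: "convex E1" and E1s: "E1 \<subseteq> gph F1" and E1c: "gph F1 \<subseteq> closure E1"
    and cE2: "convex E2" and E2s: "E2 \<subseteq> gph F2" and E2c: "gph F2 \<subseteq> closure E2"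
    and x01: "x0 \<in> rel_interior (fst ` E1)" and x02: "x0 \<in> rel_interior (fst ` E2)"
    and g1: "(xbar, y1) \<in> gph F1" and g2: "(xbar, y2) \<in> gph F2"
    and H: "\<And>x z1 z2. z1 \<in> F1 x \<Longrightarrow> z2 \<in> F2 x \<Longrightarrow>
              inner u (x - xbar) - inner v (z1 + z2 - (y1 + y2)) \<le> \<epsilon>"
  shows "\<exists>W e1. 0 \<le> e1 \<and> e1 \<le> \<epsilon>
     \<and> (\<forall>x z. (x, z) \<in> gph F1 \<longrightarrow> inner (u - W) (x - xbar) - inner v (z - y1) \<le> e1)
     \<and> (\<forall>x z. (x, z) \<in> gph F2 \<longrightarrow> inner W (x - xbar) - inner v (z - y2) \<le> \<epsilon> - e1)"
proof -
  define g where "g x1 z1 z2 = \<epsilon> - inner u (x1 - xbar) + inner v (z1 - y1) + inner v (z2 - y2)"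
    for x1 z1 z2
  define K :: "('n \<times> real) set" where
    "K = {(x1 - x2, g x1 z1 z2 + s) | x1 z1 x2 z2 s. (x1, z1) \<in> E1 \<and> (x2, z2) \<in> E2 \<and> s > 0}"
  have "E1 \<noteq> {}" using g1 E1c by auto
  then obtain p1 q1 where pq1: "(p1, q1) \<in> E1" by auto
  have "E2 \<noteq> {}" using g2 E2c by auto
  then obtain p2 q2 where pq2: "(p2, q2) \<in> E2" by auto
  have KI: "(x1 - x2, g x1 z1 z2 + s) \<in> K" if "(x1, z1) \<in> E1" "(x2, z2) \<in> E2" "s > 0"
    for x1 z1 x2 z2 s
    using that unfolding K_def by blast
  have Kne: "K \<noteq> {}" using KI[OF pq1 pq2, of 1] by auto
  have K0: "0 \<notin> K"
  proof
    assume "0 \<in> K"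
    then obtain x1 z1 x2 z2 s where h: "(x1, z1) \<in> E1" "(x2, z2) \<in> E2" "s > 0"
      "0 = x1 - x2" "0 = g x1 z1 z2 + s"
      unfolding K_def zero_prod_def by auto
    then have "z1 \<in> F1 x1" "z2 \<in> F2 x1" using E1s E2s by (auto simp: gph_def)
    from H[OF this] have "0 \<le> g x1 z1 z2"
      by (simp add: g_def inner_diff_right inner_add_right)
    with h show False by linarith
  qed
  have cK: "convex K"
    unfolding convex_def
  proof (intro ballI allI impI)
    fix p q :: "'n \<times> real" and a b :: real
    assume p: "p \<in> K" and q: "q \<in> K" and ab: "0 \<le> a" "0 \<le> b" "a + b = 1"
    from p obtain x1 z1 x2 z2 s where hp: "(x1, z1) \<in> E1" "(x2, z2) \<in> E2" "s > 0"
      "p = (x1 - x2, g x1 z1 z2 + s)" unfolding K_def by blast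
    from q obtain x1' z1' x2' z2' s' where hq: "(x1', z1') \<in> E1" "(x2', z2') \<in> E2" "s' > 0"
      "q = (x1' - x2', g x1' z1' z2' + s')" unfolding K_def by blast
    have m1: "(a *\<^sub>R x1 + b *\<^sub>R x1', a *\<^sub>R z1 + b *\<^sub>R z1') \<in> E1"
      using convexD[OF cE1 hp(1) hq(1) ab] by simp
    have m2: "(a *\<^sub>R x2 + b *\<^sub>R x2', a *\<^sub>R z2 + b *\<^sub>R z2') \<in> E2"
      using convexD[OF cE2 hp(2) hq(2) ab] by simp
    have sp: "a * s + b * s' > 0"
    proof (cases "a = 0")
      case True then show ?thesis using ab hq(3) by simp
    next
      case False then show ?thesis using ab hp(3) hq(3)
        by (simp add: add_pos_nonneg)
    qed
    have b: "b = 1 - a" using ab by simp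
    have "a *\<^sub>R p + b *\<^sub>R q = ((a *\<^sub>R x1 + b *\<^sub>R x1') - (a *\<^sub>R x2 + b *\<^sub>R x2'),
        g (a *\<^sub>R x1 + b *\<^sub>R x1') (a *\<^sub>R z1 + b *\<^sub>R z1') (a *\<^sub>R z2 + b *\<^sub>R z2') + (a * s + b * s'))"
      unfolding hp(4) hq(4) g_def b
      by (simp add: inner_simps algebra_simps)
    with KI[OF m1 m2 sp] show "a *\<^sub>R p + b *\<^sub>R q \<in> K" by simp
  qed
  obtain wc where wc1: "\<forall>k\<in>K. 0 \<le> wc \<bullet> k" and wc2: "\<exists>k\<in>K. 0 < wc \<bullet> k"
    using proper_sep[OF cK Kne K0] by blast
  obtain w c where wc: "wc = (w, c)" by (cases wc)
  have P: "0 \<le> w \<bullet> (x1 - x2) + c * (g x1 z1 z2 + s)"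
    if "(x1, z1) \<in> E1" "(x2, z2) \<in> E2" "s > 0" for x1 z1 x2 z2 s
    using wc1 KI[OF that] wc by auto
  have c0: "c \<ge> 0"
  proof (rule ccontr)
    assume "\<not> c \<ge> 0"
    then have cn: "c < 0" by simp
    define s where "s = (\<bar>w \<bullet> (p1 - p2) + c * g p1 q1 q2\<bar> + 1) / (- c)"
    have "0 < \<bar>w \<bullet> (p1 - p2) + c * g p1 q1 q2\<bar> + 1" by simp
    then have "s > 0" using cn unfolding s_def by (intro divide_pos_pos) auto
    have "c * s = - (\<bar>w \<bullet> (p1 - p2) + c * g p1 q1 q2\<bar> + 1)" using cn by (simp add: s_def)
    moreover have "0 \<le> w \<bullet> (p1 - p2) + c * g p1 q1 q2 + c * s"
      using P[OF pq1 pq2 \<open>s > 0\<close>] by (simp add: distrib_left)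
    ultimately show False by linarith
  qed
  have cpos: "c > 0"
  proof (rule ccontr)
    assume "\<not> c > 0"
    with c0 have c: "c = 0" by simp
    have le: "w \<bullet> x2 \<le> w \<bullet> x1" if "x1 \<in> fst ` E1" "x2 \<in> fst ` E2" for x1 x2
    proof -
      from that obtain z1 z2 where "(x1, z1) \<in> E1" "(x2, z2) \<in> E2" by force
      from P[OF this, of 1] c show ?thesis by (simp add: inner_diff_right)
    qed
    from wc2 obtain x1 x2 where x12: "x1 \<in> fst ` E1" "x2 \<in> fst ` E2" "w \<bullet> x2 < w \<bullet> x1"
      unfolding K_def wc c by (force simp: inner_diff_right)
    have x0in: "x0 \<in> fst ` E1" "x0 \<in> fst ` E2"
      using x01 x02 rel_interior_subset by blast+
    have cP1: "convex (fst ` E1)" by (rule convex_linear_image[OF linear_fst cE1])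
    have cP2: "convex (fst ` E2)" by (rule convex_linear_image[OF linear_fst cE2])
    show False
    proof (cases "w \<bullet> x0 < w \<bullet> x1")
      case True
      obtain e where e: "e > 1" "(1 - e) *\<^sub>R x1 + e *\<^sub>R x0 \<in> fst ` E1"
        using x01 convex_rel_interior_iff[OF cP1] x12(1) by blast
      from le[OF e(2) x0in(2)] have "w \<bullet> x0 \<le> (1 - e) * (w \<bullet> x1) + e * (w \<bullet> x0)"
        by (simp add: inner_simps)
      then have "0 \<le> (e - 1) * (w \<bullet> x0 - w \<bullet> x1)" by (simp add: algebra_simps)
      moreover have "(e - 1) * (w \<bullet> x0 - w \<bullet> x1) < 0"
        using e(1) True by (simp add: mult_pos_neg)
      ultimately show False by linarith
    next
      case False
      then have F: "w \<bullet> x2 < w \<bullet> x0" using x12(3) by linarith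
      obtain e where e: "e > 1" "(1 - e) *\<^sub>R x2 + e *\<^sub>R x0 \<in> fst ` E2"
        using x02 convex_rel_interior_iff[OF cP2] x12(2) by blast
      from le[OF x0in(1) e(2)] have "(1 - e) * (w \<bullet> x2) + e * (w \<bullet> x0) \<le> w \<bullet> x0"
        by (simp add: inner_simps)
      then have "(e - 1) * (w \<bullet> x0 - w \<bullet> x2) \<le> 0" by (simp add: algebra_simps)
      moreover have "(e - 1) * (w \<bullet> x0 - w \<bullet> x2) > 0"
        using e(1) F by simp
      ultimately show False by linarith
    qed
  qed
  define W where "W = (1 / c) *\<^sub>R w"
  have P2: "0 \<le> W \<bullet> (x1 - x2) + g x1 z1 z2"
    if "(x1, z1) \<in> E1" "(x2, z2) \<in> E2" for x1 z1 x2 z2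
  proof -
    have "0 \<le> w \<bullet> (x1 - x2) + c * g x1 z1 z2"
    proof (rule ccontr)
      assume "\<not> ?thesis"
      then have n: "w \<bullet> (x1 - x2) + c * g x1 z1 z2 < 0" by simp
      define s where "s = - (w \<bullet> (x1 - x2) + c * g x1 z1 z2) / (2 * c)"
      have "s > 0" using n cpos by (simp add: s_def divide_pos_pos)
      have "2 * (c * s) = - (w \<bullet> (x1 - x2) + c * g x1 z1 z2)" using cpos by (simp add: s_def)
      moreover have "0 \<le> w \<bullet> (x1 - x2) + c * g x1 z1 z2 + c * s"
        using P[OF that \<open>s > 0\<close>] by (simp add: distrib_left)
      ultimately show False using n by linarith
    qed
    then have "0 \<le> (w \<bullet> (x1 - x2) + c * g x1 z1 z2) / c" using cpos by simp
    also have "\<dots> = W \<bullet> (x1 - x2) + g x1 z1 z2" using cpos by (simp add: W_def add_divide_distrib)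
    finally show ?thesis .
  qed
  have P3: "0 \<le> W \<bullet> (x1 - x2) + g x1 z1 z2"
    if "(x1, z1) \<in> closure E1" "(x2, z2) \<in> E2" for x1 z1 x2 z2
  proof -
    have "closure E1 \<subseteq> {p. 0 \<le> W \<bullet> (fst p - x2) + g (fst p) (snd p) z2}"
    proof (rule closure_minimal)
      show "E1 \<subseteq> {p. 0 \<le> W \<bullet> (fst p - x2) + g (fst p) (snd p) z2}"
        using P2[OF _ that(2)] by auto
      show "closed {p. 0 \<le> W \<bullet> (fst p - x2) + g (fst p) (snd p) z2}"
        unfolding g_def by (intro closed_Collect_le continuous_intros)
    qed
    with that(1) show ?thesis by auto
  qed
  have P4: "0 \<le> W \<bullet> (x1 - x2) + g x1 z1 z2"
    if "(x1, z1) \<in> closure E1" "(x2, z2) \<in> closure E2" for x1 z1 x2 z2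
  proof -
    have "closure E2 \<subseteq> {p. 0 \<le> W \<bullet> (x1 - fst p) + g x1 z1 (snd p)}"
    proof (rule closure_minimal)
      show "E2 \<subseteq> {p. 0 \<le> W \<bullet> (x1 - fst p) + g x1 z1 (snd p)}"
        using P3[OF that(1)] by auto
      show "closed {p. 0 \<le> W \<bullet> (x1 - fst p) + g x1 z1 (snd p)}"
        unfolding g_def by (intro closed_Collect_le continuous_intros)
    qed
    with that(2) show ?thesis by auto
  qed
  define A1 where "A1 p = inner (u - W) (fst p - xbar) - inner v (snd p - y1)" for p
  define B2 where "B2 p = inner W (fst p - xbar) - inner v (snd p - y2)" for p
  have AB: "A1 p + B2 q \<le> \<epsilon>" if "p \<in> gph F1" "q \<in> gph F2" for p q
  proof -
    obtain x1 z1 where p: "p = (x1, z1)" by (cases p)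
    obtain x2 z2 where q: "q = (x2, z2)" by (cases q)
    have "0 \<le> W \<bullet> (x1 - x2) + g x1 z1 z2" using P4 that E1c E2c p q by blast
    then show ?thesis unfolding A1_def B2_def p q g_def
      by (simp add: inner_simps algebra_simps)
  qed
  have A0: "A1 (xbar, y1) = 0" by (simp add: A1_def)
  have B0: "B2 (xbar, y2) = 0" by (simp add: B2_def)
  define e1 where "e1 = (SUP p\<in>gph F1. A1 p)"
  have bdd: "bdd_above (A1 ` gph F1)"
    using AB[OF _ g2] B0 by (intro bdd_aboveI2[where M = \<epsilon>]) auto
  have ne: "gph F1 \<noteq> {}" using g1 by auto
  have e1ge: "0 \<le> e1" unfolding e1_def using cSUP_upper[OF g1 bdd] A0 by simp
  have e1le: "e1 \<le> \<epsilon>" unfolding e1_def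
    using AB[OF _ g2] B0 by (intro cSUP_least[OF ne]) auto
  have A_le: "A1 p \<le> e1" if "p \<in> gph F1" for p unfolding e1_def using cSUP_upper[OF that bdd] .
  have B_le: "B2 q \<le> \<epsilon> - e1" if "q \<in> gph F2" for q
  proof -
    have "e1 \<le> \<epsilon> - B2 q" unfolding e1_def
      using AB[OF _ that] by (intro cSUP_least[OF ne]) (auto simp: algebra_simps)
    then show ?thesis by simp
  qed
  show ?thesis
    using e1ge e1le A_le B_le unfolding A1_def B2_def by fastforce
qed


theorem mainTheorem6:
  fixes F1 F2 :: "'n::euclidean_space \<Rightarrow> 'm::euclidean_space set"
    and \<epsilon> :: real and xbar :: 'n and ybar y1 y2 v :: 'm
  assumes "nearly_convex_map F1" and "nearly_convex_map F2"
    and "\<epsilon> \<ge> 0"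
    and "rel_interior (sv_dom F1) \<inter> rel_interior (sv_dom F2) \<noteq> {}"
    and "(xbar, ybar) \<in> gph (sv_sum F1 F2)"
    and "(y1, y2) \<in> S_set F1 F2 xbar ybar"
  shows "eps_coderiv \<epsilon> (sv_sum F1 F2) xbar ybar v =
    (\<Union>(\<epsilon>1, \<epsilon>2) \<in> {(e1, e2). e1 \<ge> 0 \<and> e2 \<ge> 0 \<and> e1 + e2 = \<epsilon>}.
        mink_sum (eps_coderiv \<epsilon>1 F1 xbar y1 v) (eps_coderiv \<epsilon>2 F2 xbar y2 v))"
proof -
  have yb: "ybar = y1 + y2" "y1 \<in> F1 xbar" "y2 \<in> F2 xbar"
    using assms(6) by (auto simp: S_set_def)
  have g1: "(xbar, y1) \<in> gph F1" and g2: "(xbar, y2) \<in> gph F2"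
    using yb by (auto simp: gph_def)
  obtain E1 where E1: "convex E1" "E1 \<subseteq> gph F1" "gph F1 \<subseteq> closure E1"
    using assms(1) by (auto simp: nearly_convex_map_def nearly_convex_def)
  obtain E2 where E2: "convex E2" "E2 \<subseteq> gph F2" "gph F2 \<subseteq> closure E2"
    using assms(2) by (auto simp: nearly_convex_map_def nearly_convex_def)
  obtain x0 where x0: "x0 \<in> rel_interior (sv_dom F1)" "x0 \<in> rel_interior (sv_dom F2)"
    using assms(4) by blast
  have x01: "x0 \<in> rel_interior (fst ` E1)" using x0(1) ri_dom[OF E1] by blast
  have x02: "x0 \<in> rel_interior (fst ` E2)" using x0(2) ri_dom[OF E2] by blast
  show ?thesis
  proof (rule set_eqI iffI)+
    fix u
    assume "u \<in> eps_coderiv \<epsilon> (sv_sum F1 F2) xbar ybar v"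
    then have U: "inner u (x - xbar) - inner v (y - ybar) \<le> \<epsilon>" if "y \<in> sv_sum F1 F2 x" for x y
      using that by (auto simp: eps_coderiv_def eps_normal_def gph_def)
    have H: "inner u (x - xbar) - inner v (z1 + z2 - (y1 + y2)) \<le> \<epsilon>"
      if "z1 \<in> F1 x" "z2 \<in> F2 x" for x z1 z2
      using U[of "z1 + z2" x] that yb(1) by (auto simp: sv_sum_def)
    obtain W e1 where We: "0 \<le> e1" "e1 \<le> \<epsilon>"
      "\<forall>x z. (x, z) \<in> gph F1 \<longrightarrow> inner (u - W) (x - xbar) - inner v (z - y1) \<le> e1"
      "\<forall>x z. (x, z) \<in> gph F2 \<longrightarrow> inner W (x - xbar) - inner v (z - y2) \<le> \<epsilon> - e1"
      using key[OF E1 E2 x01 x02 g1 g2 H] by blast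
    have a: "u - W \<in> eps_coderiv e1 F1 xbar y1 v"
      using We(3) by (auto simp: eps_coderiv_def eps_normal_def)
    have b: "W \<in> eps_coderiv (\<epsilon> - e1) F2 xbar y2 v"
      using We(4) by (auto simp: eps_coderiv_def eps_normal_def)
    have "u \<in> mink_sum (eps_coderiv e1 F1 xbar y1 v) (eps_coderiv (\<epsilon> - e1) F2 xbar y2 v)"
      unfolding mink_sum_def using a b by (intro CollectI exI[of _ "u - W"] exI[of _ W]) auto
    then show "u \<in> (\<Union>(\<epsilon>1, \<epsilon>2) \<in> {(e1, e2). e1 \<ge> 0 \<and> e2 \<ge> 0 \<and> e1 + e2 = \<epsilon>}.
        mink_sum (eps_coderiv \<epsilon>1 F1 xbar y1 v) (eps_coderiv \<epsilon>2 F2 xbar y2 v))"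
      using We(1,2) by (intro UN_I[of "(e1, \<epsilon> - e1)"]) auto
  next
    fix u
    assume "u \<in> (\<Union>(\<epsilon>1, \<epsilon>2) \<in> {(e1, e2). e1 \<ge> 0 \<and> e2 \<ge> 0 \<and> e1 + e2 = \<epsilon>}.
        mink_sum (eps_coderiv \<epsilon>1 F1 xbar y1 v) (eps_coderiv \<epsilon>2 F2 xbar y2 v))"
    then obtain e1 e2 a b where h: "e1 + e2 = \<epsilon>" "u = a + b"
      "a \<in> eps_coderiv e1 F1 xbar y1 v" "b \<in> eps_coderiv e2 F2 xbar y2 v"
      by (auto simp: mink_sum_def)
    have A: "inner a (x - xbar) - inner v (z - y1) \<le> e1" if "z \<in> F1 x" for x z
      using h(3) that by (auto simp: eps_coderiv_def eps_normal_def gph_def)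
    have B: "inner b (x - xbar) - inner v (z - y2) \<le> e2" if "z \<in> F2 x" for x z
      using h(4) that by (auto simp: eps_coderiv_def eps_normal_def gph_def)
    show "u \<in> eps_coderiv \<epsilon> (sv_sum F1 F2) xbar ybar v"
      unfolding eps_coderiv_def eps_normal_def
    proof (intro CollectI ballI)
      fix p
      assume p: "p \<in> gph (sv_sum F1 F2)"
      obtain x y where xy: "p = (x, y)" by (cases p)
      from p xy obtain z1 z2 where z: "y = z1 + z2" "z1 \<in> F1 x" "z2 \<in> F2 x"
        by (auto simp: gph_def sv_sum_def)
      have "inner u (x - xbar) - inner v (y - ybar) =
          (inner a (x - xbar) - inner v (z1 - y1)) + (inner b (x - xbar) - inner v (z2 - y2))"
        using z(1) yb(1) h(2) by (simp add: inner_simps algebra_simps)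
      also have "\<dots> \<le> e1 + e2" using A[OF z(2)] B[OF z(3)] by linarith
      finally show "inner (u, - v) (p - (xbar, ybar)) \<le> \<epsilon>" using h(1) xy by simp
    qed
  qed
qed

end
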